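(* Let $A$ be a unital algebra over a field $F$ with $\operatorname{char}(F)\neq2$ and $\mathcal{A}=M_n(A)$, $n\ge2$. Then $\operatorname{QJDer}(\mathcal{A})=\operatorname{Cent}(\mathcal{A})+\operatorname{Der}(\mathcal{A})$.
   Context: $x\circ y=xy+yx$. $\operatorname{QJDer}(\mathcal{A})$: linear $f:\mathcal{A}\to\mathcal{A}$ for which there is a linear $h$ with $f(x)\circ y+x\circ f(y)=h(x\circ y)$ for all $x,y$. $\operatorname{Cent}(\mathcal{A})$: linear $f$ with $f(xy)=f(x)y=xf(y)$. $\operatorname{Der}(\mathcal{A})$: linear $d$ with $d(xy)=d(x)y+xd(y)$. Sums of sets of maps are sets of pointwise sums. *)

theory Defs
  imports "HOL-Analysis.Analysis"
begin

definition unital_algebra :: "('k::field \<Rightarrow> 'a::ring_1 \<Rightarrow> 'a) \<Rightarrow> bool" where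
  "unital_algebra smul \<longleftrightarrow> module smul \<and>
     (\<forall>c x y. smul c (x * y) = smul c x * y \<and> smul c (x * y) = x * smul c y)"

definition mscale :: "('k \<Rightarrow> 'a \<Rightarrow> 'a) \<Rightarrow> 'k \<Rightarrow> 'a ^'n^'n \<Rightarrow> 'a ^'n^'n" where
  "mscale smul c X = (\<chi> i j. smul c (X $ i $ j))"

definition flinear :: "('k::field \<Rightarrow> 'a::ring_1 \<Rightarrow> 'a) \<Rightarrow> ('a^'n^'n \<Rightarrow> 'a^'n^'n) \<Rightarrow> bool" where
  "flinear smul f \<longleftrightarrow> module_hom (mscale smul) (mscale smul) f"

definition jprod :: "'a::ring_1^'n^'n \<Rightarrow> 'a^'n^'n \<Rightarrow> 'a^'n^'n" where
  "jprod X Y = X ** Y + Y ** X"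

definition QJDer :: "('k::field \<Rightarrow> 'a::ring_1 \<Rightarrow> 'a) \<Rightarrow> ('a^'n^'n \<Rightarrow> 'a^'n^'n) set" where
  "QJDer smul = {f. flinear smul f \<and>
     (\<exists>h. flinear smul h \<and> (\<forall>X Y. jprod (f X) Y + jprod X (f Y) = h (jprod X Y)))}"

definition Cent :: "('k::field \<Rightarrow> 'a::ring_1 \<Rightarrow> 'a) \<Rightarrow> ('a^'n^'n \<Rightarrow> 'a^'n^'n) set" where
  "Cent smul = {f. flinear smul f \<and> (\<forall>X Y. f (X ** Y) = f X ** Y \<and> f (X ** Y) = X ** f Y)}"

definition Der :: "('k::field \<Rightarrow> 'a::ring_1 \<Rightarrow> 'a) \<Rightarrow> ('a^'n^'n \<Rightarrow> 'a^'n^'n) set" where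
  "Der smul = {d. flinear smul d \<and> (\<forall>X Y. d (X ** Y) = d X ** Y + X ** d Y)}"

definition map_set_sum :: "('b \<Rightarrow> 'c::plus) set \<Rightarrow> ('b \<Rightarrow> 'c) set \<Rightarrow> ('b \<Rightarrow> 'c) set" where
  "map_set_sum S T = {(\<lambda>x. f x + g x) | f g. f \<in> S \<and> g \<in> T}"

end

theory Submission
  imports Defs
begin

lemmas rexp = distrib_left distrib_right right_diff_distrib left_diff_distrib mult.assoc
  mult_1_right mult_1_left mult_minus_left mult_minus_right

lemma tf2:
  fixes a b :: "'r::ring_1"
  assumes tf: "\<forall>x::'r. x + x = 0 \<longrightarrow> x = 0" and e: "a + a = b + b"
  shows "a = b"
proof -
  have "(a-b)+(a-b) = 0" using e by (simp add: algebra_simps)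
  with tf have "a - b = 0" by blast
  thus ?thesis by simp
qed

locale jder =
  fixes D :: "'r::ring_1 \<Rightarrow> 'r"
  assumes add: "\<And>x y. D (x+y) = D x + D y"
    and JD: "\<And>x y. D (x * y + y * x) = D x * y + x * D y + D y * x + y * D x"
    and tf: "\<forall>x::'r. x + x = 0 \<longrightarrow> x = 0"
begin

lemma D0: "D 0 = 0" using add[of 0 0] by simp
lemma Dminus: "D (-x) = - D x" using add[of x "-x"] D0 by (simp add: eq_neg_iff_add_eq_0 add.commute)
lemma Ddiff: "D (x - y) = D x - D y" using add[of x "-y"] Dminus by simp

lemma D1: "D 1 = 0"
proof -
  have "D 1 + D 1 = (D 1 + D 1) + (D 1 + D 1)" using JD[of 1 1] add[of 1 1] by simp
  hence "D 1 + D 1 = 0" by simp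
  with tf show ?thesis by blast
qed

lemma Dsq: "D (x * x) = D x * x + x * D x"
proof -
  have "D (x * x) + D (x * x) = (D x * x + x * D x) + (D x * x + x * D x)"
    using JD[of x x] add[of "x * x" "x * x"] by (simp add: algebra_simps)
  thus ?thesis using tf2[OF tf] by blast
qed

lemma J1: "D (x * y * x) = D x * y * x + x * D y * x + x * y * D x"
proof -
  have eq: "x * (x * y+y * x) + (x * y+y * x) * x = ((x * x) * y + y * (x * x)) + (x * y * x + x * y * x)"
    by (simp add: algebra_simps)
  have "D (x * (x * y+y * x) + (x * y+y * x) * x) = D x * (x * y+y * x) + x * D(x * y+y * x) + D(x * y+y * x) * x + (x * y+y * x) * D x"
    by (rule JD)
  also have "\<dots> = D x * (x * y+y * x) + x * (D x * y + x * D y + D y * x + y * D x)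
      + (D x * y + x * D y + D y * x + y * D x) * x + (x * y+y * x) * D x" by (simp add: JD)
  finally have A: "D (x * (x * y+y * x) + (x * y+y * x) * x) = D x * (x * y+y * x) + x * (D x * y + x * D y + D y * x + y * D x)
      + (D x * y + x * D y + D y * x + y * D x) * x + (x * y+y * x) * D x" .
  have B: "D ((x * x) * y + y * (x * x)) = (D x * x + x * D x) * y + (x * x) * D y + D y * (x * x) + y * (D x * x + x * D x)"
    using JD[of "x * x" y] Dsq[of x] by simp
  have "D (x * y * x) + D (x * y * x) = (D x * y * x + x * D y * x + x * y * D x) + (D x * y * x + x * D y * x + x * y * D x)"
  proof -
    have "D (x * y * x) + D (x * y * x) = D (x * (x * y+y * x) + (x * y+y * x) * x) - D ((x * x) * y + y * (x * x))"
      unfolding eq add by simp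
    also have "\<dots> = (D x * y * x + x * D y * x + x * y * D x) + (D x * y * x + x * D y * x + x * y * D x)"
      unfolding A B by (simp add: algebra_simps)
    finally show ?thesis .
  qed
  thus ?thesis using tf2[OF tf] by blast
qed

definition S :: "'r \<Rightarrow> bool" where "S a \<longleftrightarrow> (\<forall>y. D (a * y) = D a * y + a * D y)"

lemma S_diff: "S a \<Longrightarrow> S b \<Longrightarrow> S (a - b)"
  unfolding S_def by (simp add: Ddiff algebra_simps)

lemma S_mult: "S a \<Longrightarrow> S b \<Longrightarrow> S (a * b)"
  unfolding S_def by (simp add: mult.assoc algebra_simps)

lemma S_idem:
  assumes idem: "e * e = e" and eu: "e * u = u" and ue: "u * e = 0" and uwe: "u * w * e = e"
  shows "S e"
proof -
  have ee: "e * (e * x) = e * x" for x by (metis idem mult.assoc)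
  have dE: "D e = D e * e + e * D e" using Dsq[of e] idem by simp
  have eDe0: "e * D e * e = 0"
  proof -
    have "e * D e * e = e * (D e * e + e * D e) * e" using dE by simp
    also have "\<dots> = e * D e * e + e * D e * e" by (simp add: algebra_simps ee idem)
    finally show ?thesis by simp
  qed
  have eDe: "e * (D e * (e * x)) = 0" for x using eDe0 by (metis mult.assoc mult_zero_left)
  have eg: "e * (1 - e) = 0" "(1 - e) * e = 0" by (simp_all add: algebra_simps idem)
  have Deg: "D e * (1 - e) = e * D e * (1 - e)"
  proof -
    have "D e * (1 - e) = (D e * e + e * D e) * (1 - e)" using dE by simp
    also have "\<dots> = e * D e * (1 - e)" by (simp add: algebra_simps idem)
    finally show ?thesis .
  qed
  define \<Delta> where "\<Delta> y = D (e * y) - D e * y - e * D y" for y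
  have \<Delta>add: "\<Delta> (x + y) = \<Delta> x + \<Delta> y" for x y
    unfolding \<Delta>_def by (simp add: algebra_simps add)
  have P1: "\<Delta> (e * y * e) = 0" for y
  proof -
    define w where "w = e * y * e"
    have ew: "e * w = w" and we: "w * e = w" and ewe: "e * w * e = w"
      unfolding w_def by (simp_all add: mult.assoc ee idem)
    have hw: "D w = D e * w + e * D w * e + w * D e"
      using  J1[of e w] unfolding ewe by (simp add: ew we mult.assoc)
    have "e * D w = e * (D e * w + e * D w * e + w * D e)"
      using arg_cong[of _ _ "\<lambda>t. e * t", OF hw] .
    also have "\<dots> = e * D w * e + w * D e"
      unfolding w_def by (simp add: algebra_simps ee eDe idem)
    finally have "e * D w = e * D w * e + w * D e" .
    hence "\<Delta> w = 0" unfolding \<Delta>_def ew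
      using hw by (metis add_diff_cancel_left' diff_diff_eq2 diff_self add.commute)
    thus ?thesis unfolding w_def .
  qed
  have P2: "\<Delta> ((1-e) * y * (1-e)) = 0" for y
  proof -
    have Dg: "D (1 - e) = - D e" by (simp add: Ddiff D1)
    define q where "q = (1-e) * y * (1-e)"
    have h: "D q = - D e * y * (1-e) + (1-e) * D y * (1-e) - (1-e) * y * D e"
      using J1[of "1-e" y] Dg unfolding q_def by simp
    have z: "e * q = 0" using eg unfolding q_def by (simp add: mult.assoc[symmetric])
    have A: "e * D q = - (e * D e * y * (1-e))"
      unfolding h by (simp add: algebra_simps ee idem)
    have B: "D e * q = e * D e * (1 - e) * y * (1-e)"
      using Deg unfolding q_def by (metis mult.assoc)
    have C: "e * D e * y * (1-e) - e * D e * (1 - e) * y * (1-e) = e * D e * e * y * (1 - e)"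
      by (simp add: algebra_simps)
    have "\<Delta> q = e * D e * e * y * (1 - e)"
      unfolding \<Delta>_def z D0 A B C[symmetric] by simp
    hence "\<Delta> q = 0" using eDe0 by simp
    thus ?thesis unfolding q_def .
  qed
  define v where "v = (1-e) * w * e"
  have ug: "u * (1-e) = u" using ue by (simp add: algebra_simps)
  have uv: "u * v = e"
  proof -
    have "u * v = (u * (1-e)) * w * e" by (simp add: v_def mult.assoc)
    thus ?thesis using ug uwe by simp
  qed
  have gu: "(1-e) * u = 0" using eu by (simp add: algebra_simps)
  have ve: "v * e = v" unfolding v_def by (simp add: mult.assoc idem)
  have ev: "e * v = 0" unfolding v_def using eg by (simp add: mult.assoc[symmetric])
  have vg: "v * (1-e) = 0" using ve by (simp add: algebra_simps)
  have gv: "(1-e) * v = v" using ev by (simp add: algebra_simps)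
  have P3: "\<Delta> a = 0" if ea: "e * a = a" and ae: "a * e = 0" for a
  proof -
    have uvu: "u * v * u = u" using uv eu by simp
    have phiu: "(1-e) * D u * e = 0"
    proof -
      have "(1-e) * D u * e = (1-e) * (D u * v * u + u * D v * u + u * v * D u) * e"
        using J1[of u v] unfolding uvu by simp
      also have "\<dots> = (1-e) * D u * v * (u * e) + ((1-e) * u) * D v * u * e + ((1-e) * u) * v * D u * e"
        by (simp add: algebra_simps)
      also have "\<dots> = 0" using gu ue by simp
      finally show ?thesis .
    qed
    define y where "y = v * a"
    have a_eq: "a = u * y" unfolding y_def using uv ea by (simp add: mult.assoc[symmetric])
    have au: "a * u = 0" using ae eu by (metis mult.assoc mult_zero_left)
    have yu: "y * u = 0" unfolding y_def using au by (simp add: mult.assoc)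
    have ye: "y * e = 0" unfolding y_def using ae by (simp add: mult.assoc)
    have yg: "y * (1-e) = y" using ye by (simp add: algebra_simps)
    have gy: "(1-e) * y = y" unfolding y_def using gv by (simp add: mult.assoc[symmetric])
    have Da: "D a = D u * y + u * D y + D y * u + y * D u"
      using JD[of u y] unfolding yu a_eq by simp
    have gDae: "(1-e) * D a * e = 0"
    proof -
      have "(1-e) * D a * e = (1-e) * (D u * y + u * D y + D y * u + y * D u) * e" using Da by simp
      also have "\<dots> = (1-e) * D u * (y * e) + ((1-e) * u) * D y * e + (1-e) * D y * (u * e) + ((1-e) * y) * D u * e"
        by (simp add: algebra_simps)
      also have "\<dots> = y * D u * e" using ye gu ue gy by simp
      also have "\<dots> = (y * (1-e)) * D u * e" using yg by simp
      also have "\<dots> = 0" using phiu by (simp add: mult.assoc)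
      finally show ?thesis .
    qed
    have Q: "D a = D e * a + e * D a + D a * e + a * D e"
      using JD[of e a] unfolding ea ae by simp
    have R1: "e * D a * e + a * D e * e = 0"
    proof -
      have "e * D a * e = e * (D e * a + e * D a + D a * e + a * D e) * e" using Q by simp
      also have "\<dots> = e * D e * (a * e) + e * D a * e + e * D a * e + (e * a) * D e * e"
        by (simp add: algebra_simps ee idem)
      finally have "e * D a * e = e * D a * e + e * D a * e + a * D e * e" using ae ea by simp
      thus ?thesis by (simp add: algebra_simps)
    qed
    have aDe: "a * D e = a * D e * e"
    proof -
      have "a * D e = a * (D e * e + e * D e)" using dE by simp
      also have "\<dots> = a * D e * e + (a * e) * D e" by (simp add: algebra_simps)
      finally show ?thesis using ae by simp
    qed
    have "\<Delta> a = D a * e + a * D e" unfolding \<Delta>_def ea using Q by (simp add: algebra_simps)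
    also have "\<dots> = (1-e) * D a * e + (e * D a * e + a * D e * e)" using aDe by (simp add: algebra_simps idem)
    also have "\<dots> = 0" using gDae R1 by simp
    finally show ?thesis .
  qed
  have P4: "\<Delta> b = 0" if be: "b * e = b" and eb: "e * b = 0" for b
  proof -
    have vuv: "v * u * v = v" using uv ve by (simp add: mult.assoc)
    have psiv: "e * D v * (1-e) = 0"
    proof -
      have "e * D v * (1-e) = e * (D v * u * v + v * D u * v + v * u * D v) * (1-e)"
        using J1[of v u] unfolding vuv by simp
      also have "\<dots> = e * D v * u * (v * (1-e)) + (e * v) * D u * v * (1-e) + (e * v) * u * D v * (1-e)"
        by (simp add: algebra_simps)
      also have "\<dots> = 0" using vg ev by simp
      finally show ?thesis .
    qed
    define y where "y = b * u"
    have b_eq: "b = y * v" unfolding y_def using uv be by (simp add: mult.assoc)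
    have vb: "v * b = 0" unfolding v_def using eb by (simp add: mult.assoc)
    have vy: "v * y = 0" unfolding y_def using vb by (simp add: mult.assoc[symmetric])
    have ey: "e * y = 0" unfolding y_def using eb by (simp add: mult.assoc[symmetric])
    have gy: "(1-e) * y = y" using ey by (simp add: algebra_simps)
    have ye: "y * e = 0" unfolding y_def using ue by (simp add: mult.assoc)
    have yg: "y * (1-e) = y" using ye by (simp add: algebra_simps)
    have Db: "D b = D y * v + y * D v + D v * y + v * D y"
      using JD[of y v] unfolding vy b_eq[symmetric] by simp
    have eDbg: "e * D b * (1-e) = 0"
    proof -
      have "e * D b * (1-e) = e * (D y * v + y * D v + D v * y + v * D y) * (1-e)" using Db by simp
      also have "\<dots> = e * D y * (v * (1-e)) + (e * y) * D v * (1-e) + e * D v * (y * (1-e)) + (e * v) * D y * (1-e)"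
        by (simp add: algebra_simps)
      also have "\<dots> = e * D v * ((1-e) * y)" using vg ey yg ev gy by simp
      also have "\<dots> = 0" using psiv by (metis mult.assoc mult_zero_left)
      finally show ?thesis .
    qed
    have Q: "D b = D e * b + e * D b + D b * e + b * D e"
      using JD[of e b] unfolding be eb by simp
    have R1: "e * D e * b + e * D b * e = 0"
    proof -
      have "e * D b * e = e * (D e * b + e * D b + D b * e + b * D e) * e" using Q by simp
      also have "\<dots> = e * D e * (b * e) + e * D b * e + e * D b * e + (e * b) * D e * e"
        by (simp add: algebra_simps ee idem)
      finally have "e * D b * e = e * D e * b + e * D b * e + e * D b * e" using be eb by simp
      thus ?thesis by (simp add: algebra_simps)
    qed
    have gb: "(1-e) * b = b" using eb by (simp add: algebra_simps)
    have Deb: "D e * b = e * D e * b"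
    proof -
      have "D e * b = D e * (1-e) * b" using gb by (simp add: mult.assoc)
      also have "\<dots> = e * D e * (1-e) * b" using Deg by simp
      also have "\<dots> = e * D e * b" using gb by (simp add: mult.assoc)
      finally show ?thesis .
    qed
    have "\<Delta> b = - (D e * b) - e * D b" unfolding \<Delta>_def eb D0 by simp
    also have "\<dots> = - (e * D e * b + e * D b * e) - e * D b * (1-e)" using Deb by (simp add: algebra_simps)
    also have "\<dots> = 0" using R1 eDbg by simp
    finally show ?thesis .
  qed
  have "\<Delta> y = 0" for y
  proof -
    have dec: "y = e * y * e + e * y * (1-e) + (1-e) * y * e + (1-e) * y * (1-e)" by (simp add: algebra_simps)
    have "\<Delta> y = \<Delta> (e * y * e) + \<Delta> (e * y * (1-e)) + \<Delta> ((1-e) * y * e) + \<Delta> ((1-e) * y * (1-e))"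
      by (subst dec) (simp add: \<Delta>add)
    moreover have "\<Delta> (e * y * (1-e)) = 0"
      by (rule P3) (simp_all add: mult.assoc[symmetric] ee idem eg, simp add: mult.assoc eg)
    moreover have "\<Delta> ((1-e) * y * e) = 0"
      by (rule P4) (simp_all add: mult.assoc idem eg, simp add: mult.assoc[symmetric] eg)
    ultimately show ?thesis using P1 P2 by simp
  qed
  thus ?thesis unfolding S_def \<Delta>_def by (simp add: algebra_simps)
qed

end


lemma qj_central:
  fixes f h :: "'r::ring_1 \<Rightarrow> 'r"
  assumes addh: "\<And>x y. h (x+y) = h x + h y"
    and J: "\<And>x y. (f x * y + y * f x) + (x * f y + f y * x) = h (x * y + y * x)"
    and idem: "e * e = e"
  shows "e * f 1 = f 1 * e"
proof -
  define z where "z = f 1"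
  have ee: "e * (e * x) = e * x" for x by (metis idem mult.assoc)
  have H: "h x + h x = f x + f x + (x * z + z * x)" for x
    using J[of x 1] addh[of x x] by (simp add: z_def algebra_simps)
  have K: "(f e * e + e * f e) + (f e * e + e * f e) = f e + f e + (e * z + z * e)"
    using J[of e e] H[of e] addh[of e e] idem by (simp add: algebra_simps)
  have K1: "e * ((f e * e + e * f e) + (f e * e + e * f e)) * (1 - e) = e * (f e + f e + (e * z + z * e)) * (1-e)"
    using K by simp
  hence "e * z * (1 - e) = 0"
    apply (simp only: rexp ee idem)
    apply (simp add: algebra_simps)
    done
  hence a: "e * z = e * z * e" by (simp add: algebra_simps idem)
  have K2: "(1 - e) * ((f e * e + e * f e) + (f e * e + e * f e)) * e = (1 - e) * (f e + f e + (e * z + z * e)) * e"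
    using K by simp
  hence "(1 - e) * z * e = 0"
    apply (simp only: rexp ee idem)
    apply (simp add: algebra_simps)
    done
  hence b: "z * e = e * z * e" by (simp add: algebra_simps idem)
  show ?thesis using a b z_def by simp
qed

lemma qj_jder:
  fixes f h :: "'r::ring_1 \<Rightarrow> 'r"
  assumes addf: "\<And>x y. f (x+y) = f x + f y" and addh: "\<And>x y. h (x+y) = h x + h y"
    and J: "\<And>x y. (f x * y + y * f x) + (x * f y + f y * x) = h (x * y + y * x)"
    and tf: "\<forall>x::'r. x + x = 0 \<longrightarrow> x = 0"
    and cz: "\<And>x. x * f 1 = f 1 * x"
  shows "jder (\<lambda>x. f x - f 1 * x)"
proof
  define z where "z = f 1"
  show "f (x + y) - f 1 * (x + y) = f x - f 1 * x + (f y - f 1 * y)" for x y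
    by (simp add: addf algebra_simps)
  show "\<forall>x::'r. x + x = 0 \<longrightarrow> x = 0" by fact
  fix x y :: 'r
  define w where "w = x * y + y * x"
  have H: "h t + h t = f t + f t + (z * t + z * t)" for t
    using J[of t 1] addh[of t t] cz[of t] by (simp add: z_def algebra_simps)
  have e1: "(f x * y + y * f x + (x * f y + f y * x)) + (f x * y + y * f x + (x * f y + f y * x)) = f w + f w + (z * w + z * w)"
    using J[of x y] H[of w] unfolding w_def by simp
  have c1: "x * (z * y) = z * (x * y)" using cz[of x] by (simp add: z_def mult.assoc[symmetric])
  have c2: "y * (z * x) = z * (y * x)" using cz[of y] by (simp add: z_def mult.assoc[symmetric])
  have "(f w - z * w) + (f w - z * w) =
     ((f x - z * x) * y + x * (f y - z * y) + (f y - z * y) * x + y * (f x - z * x)) +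
     ((f x - z * x) * y + x * (f y - z * y) + (f y - z * y) * x + y * (f x - z * x))"
  proof -
    have "((f x - z * x) * y + x * (f y - z * y) + (f y - z * y) * x + y * (f x - z * x)) +
     ((f x - z * x) * y + x * (f y - z * y) + (f y - z * y) * x + y * (f x - z * x)) =
     (f x * y + y * f x + (x * f y + f y * x)) + (f x * y + y * f x + (x * f y + f y * x))
      - (z * w + z * w + z * w + z * w)"
      unfolding w_def by (simp add: algebra_simps c1 c2)
    also have "\<dots> = (f w - z * w) + (f w - z * w)" unfolding e1 by (simp add: algebra_simps)
    finally show ?thesis by simp
  qed
  hence "f w - z * w = (f x - z * x) * y + x * (f y - z * y) + (f y - z * y) * x + y * (f x - z * x)"
    using tf2[OF tf] by blast
  thus "f (x * y + y * x) - f 1 * (x * y + y * x) =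
         (f x - f 1 * x) * y + x * (f y - f 1 * y) + (f y - f 1 * y) * x + y * (f x - f 1 * x)"
    unfolding w_def z_def .
qed

typedef ('a::ring_1, 'n::finite) sqm = "UNIV :: ('a^'n^'n) set" by simp

lemma matrix_add_rdistrib': "((A::'a::ring_1^'n^'m) + B) ** C = A ** C + B ** C"
  by (vector matrix_matrix_mult_def sum.distrib[symmetric] field_simps)

instantiation sqm :: (ring_1, finite) ring_1
begin
definition zero_sqm_def: "0 = Abs_sqm 0"
definition one_sqm_def: "1 = Abs_sqm (mat 1)"
definition plus_sqm_def: "x + y = Abs_sqm (Rep_sqm x + Rep_sqm y)"
definition minus_sqm_def: "x - y = Abs_sqm (Rep_sqm x - Rep_sqm y)"
definition uminus_sqm_def: "- x = Abs_sqm (- Rep_sqm x)"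
definition times_sqm_def: "x * y = Abs_sqm (Rep_sqm x ** Rep_sqm y)"
instance
proof
  fix a b c :: "('a,'b) sqm"
  show "a + b + c = a + (b + c)" unfolding plus_sqm_def by (simp add: Abs_sqm_inverse add.assoc)
  show "a + b = b + a" unfolding plus_sqm_def by (simp add: add.commute)
  show "0 + a = a" unfolding plus_sqm_def zero_sqm_def by (simp add: Abs_sqm_inverse Rep_sqm_inverse)
  show "- a + a = 0" unfolding plus_sqm_def zero_sqm_def uminus_sqm_def by (simp add: Abs_sqm_inverse)
  show "a - b = a + - b" unfolding plus_sqm_def minus_sqm_def uminus_sqm_def by (simp add: Abs_sqm_inverse)
  show "a * b * c = a * (b * c)" unfolding times_sqm_def by (simp add: Abs_sqm_inverse matrix_mul_assoc)
  show "1 * a = a" unfolding times_sqm_def one_sqm_def by (simp add: Abs_sqm_inverse Rep_sqm_inverse)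
  show "a * 1 = a" unfolding times_sqm_def one_sqm_def by (simp add: Abs_sqm_inverse Rep_sqm_inverse)
  show "(a + b) * c = a * c + b * c" unfolding times_sqm_def plus_sqm_def by (simp add: Abs_sqm_inverse matrix_add_rdistrib')
  show "a * (b + c) = a * b + a * c" unfolding times_sqm_def plus_sqm_def by (simp add: Abs_sqm_inverse matrix_add_ldistrib)
  show "(0::('a,'b) sqm) \<noteq> 1" unfolding zero_sqm_def one_sqm_def
  proof
    assume "Abs_sqm 0 = (Abs_sqm (mat 1) :: ('a,'b) sqm)"
    hence "(0::'a^'b^'b) = mat 1" by (simp add: Abs_sqm_inject)
    hence e: "mat 1 = (0::'a^'b^'b)" by simp
    have "(mat 1::'a^'b^'b) $ i $ i = 1" for i by (simp add: mat_def)
    thus False unfolding e by simp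
  qed
qed
end

lemma Rep_sqm_ops [simp]:
  "Rep_sqm (x + y) = Rep_sqm x + Rep_sqm y"
  "Rep_sqm (x - y) = Rep_sqm x - Rep_sqm y"
  "Rep_sqm (x * y) = Rep_sqm x ** Rep_sqm y"
  "Rep_sqm 0 = 0" "Rep_sqm 1 = mat 1"
  by (simp_all add: plus_sqm_def minus_sqm_def times_sqm_def zero_sqm_def one_sqm_def Abs_sqm_inverse)

lemma Rep_sqm_sum: "Rep_sqm (sum f A) = (\<Sum>a\<in>A. Rep_sqm (f a))"
  by (induction A rule: infinite_finite_induct) simp_all

lemma if_conj: "(if P \<and> Q then a else 0) = (if P then (if Q then a else 0) else 0)" by simp

definition U :: "'a::ring_1 \<Rightarrow> 'n::finite \<Rightarrow> 'n \<Rightarrow> ('a,'n) sqm" where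
  "U c i j = Abs_sqm (\<chi> k l. if k = i \<and> l = j then c else 0)"

lemma Rep_U: "Rep_sqm (U c i j) $ k $ l = (if k = i \<and> l = j then c else 0)"
  by (simp add: U_def Abs_sqm_inverse)

lemma U_mult: "U c i j * U d k l = (if j = k then U (c*d) i l else 0)"
proof -
  have "Rep_sqm (U c i j * U d k l) = Rep_sqm (if j = k then U (c*d) i l else 0)"
    by (auto simp: vec_eq_iff matrix_matrix_mult_def Rep_U if_distrib[of "\<lambda>t. t * _"] sum.delta cong: if_cong)
  thus ?thesis using Rep_sqm_inject by blast
qed

lemma U_add: "U c i j + U d i j = U (c + d) i j"
proof -
  have "Rep_sqm (U c i j + U d i j) = Rep_sqm (U (c + d) i j)"
    by (auto simp: vec_eq_iff Rep_U)
  thus ?thesis using Rep_sqm_inject by blast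
qed

lemma dsum: "(\<Sum>a\<in>UNIV. \<Sum>b\<in>UNIV. if i = a \<and> j = b then g a b else 0) = g i j"
  for g :: "'n::finite \<Rightarrow> 'm::finite \<Rightarrow> 'a::comm_monoid_add"
proof -
  have "(\<Sum>b\<in>UNIV. if i = a \<and> j = b then g a b else 0) = (if i = a then g a j else 0)" for a
    by (cases "i = a") (simp_all add: sum.delta')
  thus ?thesis by (simp add: sum.delta')
qed

lemma sqm_decomp: "x = (\<Sum>i\<in>UNIV. \<Sum>j\<in>UNIV. U (Rep_sqm x $ i $ j) i j)"
proof -
  have "Rep_sqm x = Rep_sqm (\<Sum>i\<in>UNIV. \<Sum>j\<in>UNIV. U (Rep_sqm x $ i $ j) i j)"
    by (simp add: Rep_sqm_sum vec_eq_iff sum_component Rep_U dsum)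
  thus ?thesis using Rep_sqm_inject by blast
qed


lemma sqm_gen:
  assumes card: "CARD('n::finite) \<ge> 2"
    and Pdiff: "\<And>x y. P x \<Longrightarrow> P y \<Longrightarrow> P (x - y)"
    and Pmult: "\<And>x y. P x \<Longrightarrow> P y \<Longrightarrow> P (x * y)"
    and Pidem: "\<And>e u w. e*e = e \<Longrightarrow> e*u = u \<Longrightarrow> u*e = 0 \<Longrightarrow> u*w*e = e \<Longrightarrow> P e"
  shows "P (x :: ('a::ring_1,'n) sqm)"
proof -
  have other: "\<exists>j::'n. j \<noteq> i" for i
  proof (rule ccontr)
    assume "\<not> (\<exists>j::'n. j \<noteq> i)"
    hence "(UNIV::'n set) = {i}" by auto
    hence "card (UNIV::'n set) = card {i}" by (rule arg_cong)
    hence "CARD('n) = 1" by simp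
    thus False using card by simp
  qed
  have P0: "P (0::('a,'n) sqm)" by (rule Pidem[of 0 0 0]) simp_all
  have Padd: "P (x + y)" if "P x" "P y" for x y :: "('a,'n) sqm"
  proof -
    have "P (x - (0 - y))" using that P0 Pdiff by blast
    thus ?thesis by simp
  qed
  have Poff: "P (U c i j)" if ij: "i \<noteq> j" for c i j
  proof -
    have "P (U 1 i i)"
      by (rule Pidem[of _ "U 1 i j" "U 1 j i"]) (use ij in \<open>simp_all add: U_mult\<close>)
    moreover have "P (U 1 i i + U c i j)"
      by (rule Pidem[of _ "U 1 i j" "U 1 j i"])
         (use ij in \<open>simp_all add: U_mult algebra_simps\<close>)
    ultimately have "P ((U 1 i i + U c i j) - U 1 i i)" using Pdiff by blast
    thus ?thesis by simp
  qed
  have PU: "P (U c i j)" for c i j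
  proof (cases "i = j")
    case True
    obtain k where k: "k \<noteq> i" using other by blast
    have "P (U c i k * U 1 k j)" using Pmult Poff k True by (metis)
    thus ?thesis by (simp add: U_mult)
  next
    case False thus ?thesis by (rule Poff)
  qed
  have Psum: "P (sum g A)" if "\<And>a. P (g a)" for g :: "'b \<Rightarrow> ('a,'n) sqm" and A
    using that by (induction A rule: infinite_finite_induct) (simp_all add: P0 Padd)
  show ?thesis
    by (subst sqm_decomp) (intro Psum PU)
qed


lemma module_mscale:
  assumes "module smul"
  shows "module (mscale smul :: 'k::field \<Rightarrow> 'a::ring_1^'n^'n \<Rightarrow> 'a^'n^'n)"
proof -
  interpret module smul by fact
  show ?thesis
    by unfold_locales (simp_all add: mscale_def vec_eq_iff scale_right_distrib scale_left_distrib)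
qed

lemma flinear_iff:
  assumes "module smul"
  shows "flinear smul (g :: 'a::ring_1^'n^'n \<Rightarrow> 'a^'n^'n) \<longleftrightarrow>
    (\<forall>x y. g (x+y) = g x + g y) \<and> (\<forall>r x. g (mscale smul r x) = mscale smul r (g x))"
  using module_mscale[OF assms]
  unfolding flinear_def module_hom_def module_hom_axioms_def by blast

lemma mscale_mult_left:
  assumes "unital_algebra smul"
  shows "A ** mscale smul r B = mscale smul r (A ** (B :: 'a::ring_1^'n^'n))"
proof -
  interpret module smul using assms unfolding unital_algebra_def by blast
  have c: "x * smul r y = smul r (x * y)" for x y using assms unfolding unital_algebra_def by metis
  show ?thesis
    by (simp add: vec_eq_iff mscale_def matrix_matrix_mult_def c scale_sum_right)
qed

lemma mscale_diff:
  assumes "module smul"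
  shows "mscale smul r (A - B) = mscale smul r A - mscale smul r (B :: 'a::ring_1^'n^'n)"
proof -
  interpret module smul by fact
  show ?thesis by (simp add: vec_eq_iff mscale_def scale_right_diff_distrib)
qed

lemma mscale_add:
  assumes "module smul"
  shows "mscale smul r (A + B) = mscale smul r A + mscale smul r (B :: 'a::ring_1^'n^'n)"
proof -
  interpret module smul by fact
  show ?thesis by (simp add: vec_eq_iff mscale_def scale_right_distrib)
qed

lemma tf_scalar:
  fixes smul :: "'k::field \<Rightarrow> 'a::ring_1 \<Rightarrow> 'a"
  assumes "unital_algebra smul" and "(2::'k::field) \<noteq> 0" and "a + a = (0::'a::ring_1)"
  shows "a = 0"
proof -
  interpret module smul using assms unfolding unital_algebra_def by blast
  have "a = smul (inverse 2 * 2) a" using assms(2) by simp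
  also have "\<dots> = smul (inverse 2) (smul (1+1) a)" by simp
  also have "\<dots> = smul (inverse 2) (a + a)" by (simp only: scale_left_distrib scale_one)
  also have "\<dots> = 0" using assms(3) by simp
  finally show ?thesis .
qed

lemma Abs_sqm_simps [simp]: "Rep_sqm (Abs_sqm X) = X"
  by (simp add: Abs_sqm_inverse)

theorem corollary4p3:
  fixes smul :: "'k::field \<Rightarrow> 'a::ring_1 \<Rightarrow> 'a"
  assumes "unital_algebra smul"
    and "(2::'k) \<noteq> 0"
    and "CARD('n::finite) \<ge> 2"
  shows "(QJDer smul :: ('a^'n^'n \<Rightarrow> 'a^'n^'n) set) =
         map_set_sum (Cent smul) (Der smul)"
proof
  have md: "module smul" using assms(1) unfolding unital_algebra_def by blast
  note fl = flinear_iff[OF md]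
  show "(QJDer smul :: ('a^'n^'n \<Rightarrow> 'a^'n^'n) set) \<subseteq> map_set_sum (Cent smul) (Der smul)"
  proof
    fix f :: "'a^'n^'n \<Rightarrow> 'a^'n^'n"
    assume "f \<in> QJDer smul"
    then obtain h where ff: "flinear smul f" and hf: "flinear smul h"
      and J: "\<And>X Y. jprod (f X) Y + jprod X (f Y) = h (jprod X Y)"
      unfolding QJDer_def by blast
    define F where "F x = Abs_sqm (f (Rep_sqm x))" for x :: "('a,'n) sqm"
    define H where "H x = Abs_sqm (h (Rep_sqm x))" for x :: "('a,'n) sqm"
    have addF: "F (x+y) = F x + F y" for x y
      using ff unfolding fl F_def by (simp add: Rep_sqm_inject[symmetric])
    have addH: "H (x+y) = H x + H y" for x y
      using hf unfolding fl H_def by (simp add: Rep_sqm_inject[symmetric])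
    have JF: "(F x * y + y * F x) + (x * F y + F y * x) = H (x*y + y*x)" for x y
      using J[of "Rep_sqm x" "Rep_sqm y"] unfolding F_def H_def jprod_def
      by (simp add: Rep_sqm_inject[symmetric])
    have tfM: "\<forall>x::('a,'n) sqm. x + x = 0 \<longrightarrow> x = 0"
    proof (intro allI impI)
      fix x :: "('a,'n) sqm" assume "x + x = 0"
      hence "Rep_sqm x + Rep_sqm x = 0" by (metis Rep_sqm_ops(1,4))
      hence "Rep_sqm x $ i $ j + Rep_sqm x $ i $ j = 0" for i j by (simp add: vec_eq_iff)
      hence "Rep_sqm x $ i $ j = 0" for i j using tf_scalar[OF assms(1,2)] by blast
      hence "Rep_sqm x = Rep_sqm 0" by (simp add: vec_eq_iff)
      thus "x = 0" by (simp only: Rep_sqm_inject)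
    qed
    have cz: "x * F 1 = F 1 * x" for x
    proof (rule sqm_gen[OF assms(3), where P = "\<lambda>x. x * F 1 = F 1 * x"])
      show "(x - y) * F 1 = F 1 * (x - y)" if "x * F 1 = F 1 * x" "y * F 1 = F 1 * y" for x y
        using that by (simp add: algebra_simps)
      show "(x * y) * F 1 = F 1 * (x * y)" if "x * F 1 = F 1 * x" "y * F 1 = F 1 * y" for x y
        using that by (metis mult.assoc)
      show "e * F 1 = F 1 * e" if "e * e = e" for e
        by (rule qj_central[OF addH JF that])
    qed
    have jd: "jder (\<lambda>x. F x - F 1 * x)" by (rule qj_jder[OF addF addH JF tfM cz])
    interpret jder "\<lambda>x. F x - F 1 * x" by (rule jd)
    have Sall: "S x" for x
      by (rule sqm_gen[OF assms(3)]) (auto intro: S_diff S_mult S_idem)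
    define Z where "Z = f (mat 1)"
    have RF1: "Rep_sqm (F 1) = Z" unfolding F_def Z_def by simp
    have Zc: "Z ** X = X ** Z" for X
      using arg_cong[OF cz[of "Abs_sqm X"], of Rep_sqm] by (simp add: RF1)
    have Dm: "f (X ** Y) - Z ** (X ** Y) = (f X - Z ** X) ** Y + X ** (f Y - Z ** Y)" for X Y
      using arg_cong[OF Sall[unfolded S_def, rule_format, of "Abs_sqm X" "Abs_sqm Y"], of Rep_sqm]
      by (simp add: F_def RF1 Z_def)
    define c where "c X = Z ** X" for X :: "'a^'n^'n"
    define d where "d X = f X - Z ** X" for X :: "'a^'n^'n"
    have Zc2: "Z ** X ** Y = X ** Z ** Y" for X Y by (metis Zc)
    have "c \<in> Cent smul"
      unfolding Cent_def mem_Collect_eq fl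
      by (auto simp: c_def matrix_add_ldistrib mscale_mult_left[OF assms(1)] matrix_mul_assoc Zc2)
    moreover have "d \<in> Der smul"
      unfolding Der_def mem_Collect_eq fl
      using ff unfolding fl
      by (auto simp: d_def matrix_add_ldistrib mscale_mult_left[OF assms(1)] mscale_diff[OF md] Dm)
    moreover have "f = (\<lambda>x. c x + d x)" by (simp add: c_def d_def)
    ultimately show "f \<in> map_set_sum (Cent smul) (Der smul)"
      unfolding map_set_sum_def by blast
  qed
  show "map_set_sum (Cent smul) (Der smul) \<subseteq> (QJDer smul :: ('a^'n^'n \<Rightarrow> 'a^'n^'n) set)"
  proof
    fix g :: "'a^'n^'n \<Rightarrow> 'a^'n^'n"
    assume "g \<in> map_set_sum (Cent smul) (Der smul)"
    then obtain c d where g: "g = (\<lambda>x. c x + d x)" and c: "c \<in> Cent smul" and d: "d \<in> Der smul"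
      unfolding map_set_sum_def by blast
    have cl: "flinear smul c" using c unfolding Cent_def by blast
    have cm: "\<And>X Y. c (X ** Y) = c X ** Y" "\<And>X Y. c (X ** Y) = X ** c Y"
      using c unfolding Cent_def by blast+
    have dl: "flinear smul d" using d unfolding Der_def by blast
    have dm: "\<And>X Y. d (X ** Y) = d X ** Y + X ** d Y" using d unfolding Der_def by blast
    have "flinear smul g" using cl dl unfolding fl g by (simp add: mscale_add[OF md] algebra_simps)
    moreover have "flinear smul (\<lambda>x. c x + c x + d x)"
      using cl dl unfolding fl by (simp add: mscale_add[OF md] algebra_simps)
    moreover have "jprod (g X) Y + jprod X (g Y) = c (jprod X Y) + c (jprod X Y) + d (jprod X Y)" for X Y
    proof -
      have ca: "c (A + B) = c A + c B" for A B using cl unfolding fl by blast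
      have da: "d (A + B) = d A + d B" for A B using dl unfolding fl by blast
      have "c (jprod X Y) + c (jprod X Y) = (c X ** Y + Y ** c X) + (X ** c Y + c Y ** X)"
        unfolding jprod_def ca by (metis cm add.commute add.assoc)
      moreover have "d (jprod X Y) = d X ** Y + X ** d Y + (d Y ** X + Y ** d X)"
        unfolding jprod_def da dm ..
      ultimately show ?thesis unfolding g jprod_def
        by (simp add: matrix_add_ldistrib matrix_add_rdistrib' algebra_simps)
    qed
    ultimately show "g \<in> QJDer smul" unfolding QJDer_def by blast
  qed
qed

end
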